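(* In the model described in the context, with $\tilde k(p)=(1+\theta)p^c$ for $0<c<1$ and $\theta\ge0$, if $\lambda(1-c)\ge\gamma$ then the optimal indemnity is $I^*\equiv0$.
   Context: Let $X\ge0$ be a random variable with $\mathbb{P}(X=0)=1-q$, where $q\in(0,1]$, and with density $q\lambda e^{-\lambda x}$ on $(0,\infty)$, where $\lambda>0$. So $S_X(t)=\mathbb{P}(X>t)=qe^{-\lambda t}$ for $t\ge0$. $\mathcal{I}_c$ is the set of $I:[0,\infty)\to[0,\infty)$ with $0\le I(x)\le x$ and $0\le I(x)-I(y)\le x-y$ for $0\le y\le x$. For $Y\ge0$ with $S_Y(t)=\mathbb{P}(Y>t)$, the premium is $$\pi(Y)=\int_0^\infty\tilde k(S_Y(t))\,dt.$$ Equivalently, $\pi(Y)=(1+\theta)\mathbb{E}Y+\rho_k(Y)$ with $k(p)=\tilde k(p)-(1+\theta)p$. The buyer has wealth $w$ and utility $u$ with $u'(x)=e^{-\gamma x}$, $\gamma>0$. She chooses $I\in\mathcal{I}_c$ to maximize $\mathbb{E}[u(w-X+I(X)-\pi(I(X)))]$; the buyer's distortion is the identity. The optimal indemnity is unique up to $\mathbb{P}$-a.s. equality of $I(X)$. *)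

theory Defs
  imports "HOL-Analysis.Analysis"
begin

text \<open>Expectation of f(X), where P(X=0)=1-q and X has density q lam exp(-lam x) on (0,oo).\<close>
definition expX :: "real \<Rightarrow> real \<Rightarrow> (real \<Rightarrow> real) \<Rightarrow> real" where
  "expX q lam f = (1 - q) * f 0 + (LBINT x:{0<..}. f x * (q * lam * exp (- lam * x)))"

definition survI :: "real \<Rightarrow> real \<Rightarrow> (real \<Rightarrow> real) \<Rightarrow> real \<Rightarrow> real" where
  "survI q lam I t = expX q lam (\<lambda>x. if I x > t then 1 else 0)"

definition premium :: "(real \<Rightarrow> real) \<Rightarrow> real \<Rightarrow> real \<Rightarrow> (real \<Rightarrow> real) \<Rightarrow> real" where
  "premium kt q lam I = (LBINT t:{0..}. kt (survI q lam I t))"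

definition Ic :: "(real \<Rightarrow> real) set" where
  "Ic = {I. (\<forall>x\<ge>0. 0 \<le> I x \<and> I x \<le> x) \<and>
            (\<forall>x y. 0 \<le> y \<and> y \<le> x \<longrightarrow> 0 \<le> I x - I y \<and> I x - I y \<le> x - y)}"

definition EU :: "(real \<Rightarrow> real) \<Rightarrow> (real \<Rightarrow> real) \<Rightarrow> real \<Rightarrow> real \<Rightarrow> real \<Rightarrow> (real \<Rightarrow> real) \<Rightarrow> real" where
  "EU u kt q lam w I = expX q lam (\<lambda>x. u (w - x + I x - premium kt q lam I))"

end

theory Submission
  imports Defs
begin


lemma exp_nn:
  fixes k c :: real assumes "k > 0"
  shows "(\<integral>\<^sup>+x. ennreal (indicator {c..} x * exp(-k*x)) \<partial>lborel) = ennreal (exp(-k*c)/k)"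
proof -
  have "((\<lambda>x. indicator {c..} x * exp(-k*x)) has_integral exp(-k*c)/k) UNIV"
  proof -
    have e: "(\<lambda>x. indicator {c..} x * exp(-k*x)) = (\<lambda>x. if x \<in> {c..} then exp(-k*x) else 0)"
      by (auto simp: indicator_def)
    show ?thesis unfolding e has_integral_restrict_UNIV
      using has_integral_exp_minus_to_infinity[OF assms, of c] by simp
  qed
  then show ?thesis
    by (intro nn_integral_has_integral_lborel) auto
qed

lemma exp_set:
  fixes k c :: real assumes "k > 0"
  shows "set_integrable lborel {c..} (\<lambda>x. exp(-k*x))" "(LBINT x:{c..}. exp(-k*x)) = exp(-k*c)/k"
proof -
  have "integrable lborel (\<lambda>x. indicator {c..} x * exp(-k*x)) \<and> integral\<^sup>L lborel (\<lambda>x. indicator {c..} x * exp(-k*x)) = exp(-k*c)/k"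
    using exp_nn[OF assms, of c] assms
    by (subst nn_integral_eq_integrable[symmetric]) auto
  then show "set_integrable lborel {c..} (\<lambda>x. exp(-k*x))" "(LBINT x:{c..}. exp(-k*x)) = exp(-k*c)/k"
    by (simp_all add: set_integrable_def set_lebesgue_integral_def)
qed

lemma exp_set':
  fixes k c :: real assumes "k > 0"
  shows "set_integrable lborel {c<..} (\<lambda>x. exp(-k*x))" "(LBINT x:{c<..}. exp(-k*x)) = exp(-k*c)/k"
proof -
  show "set_integrable lborel {c<..} (\<lambda>x. exp(-k*x))"
    by (rule set_integrable_subset[OF exp_set(1)[OF assms, of c]]) auto
  have "(LBINT x:{c<..}. exp(-k*x)) = (LBINT x:{c..}. exp(-k*x))"
    by (rule set_integral_cong_set) (auto simp: set_borel_measurable_def intro: eventually_mono[OF AE_lborel_singleton[of c]])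
  then show "(LBINT x:{c<..}. exp(-k*x)) = exp(-k*c)/k" using exp_set(2)[OF assms] by simp
qed



lemma key_ineq:
  fixes q lam c \<theta> \<gamma> a :: real
  assumes q: "0 < q" "q \<le> 1" and lam: "0 < lam" and c: "0 < c" "c < 1" and th: "0 \<le> \<theta>"
    and g: "0 < \<gamma>" and lc: "lam * (1 - c) \<ge> \<gamma>" and a: "0 \<le> a"
  shows "q * lam * (exp (-(lam-\<gamma>)*a) / (lam-\<gamma>)) \<le>
         (1 - q + q*lam/(lam-\<gamma>)) * ((1+\<theta>) * (q * exp (-lam*a)) powr c)"
proof -
  define L where "L = lam - \<gamma>"
  have Lc: "L \<ge> lam * c" using lc unfolding L_def by (simp add: algebra_simps)
  have L0: "L > 0" using Lc lam c by (smt (verit) mult_pos_pos)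
  have pw: "(q * exp (-lam*a)) powr c = q powr c * exp (-lam*a*c)"
    using q by (simp add: powr_mult exp_powr_real)
  have e: "exp (-L*a) \<le> exp (-lam*a*c)"
    using mult_right_mono[OF Lc a] by (simp add: algebra_simps)
  have y: "q powr (1-c) * 1 powr c \<le> (1-c)*q + c*1"
    by (rule Youngs_inequality_0) (use q c in auto)
  have qq: "q = q powr c * q powr (1-c)" using q by (simp add: powr_add[symmetric])
  have qc0: "q powr c > 0" using q by simp
  have i1: "q * lam \<le> q powr c * (lam * ((1-c)*q + c))"
    using y qc0 lam by (subst qq) (simp add: mult_left_mono mult.assoc)
  have i2: "lam * ((1-c)*q + c) \<le> L*(1-q) + q*lam"
  proof -
    have "lam * ((1-c)*q + c) = lam - lam*(1-c)*(1-q)" by (simp add: algebra_simps)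
    also have "\<dots> \<le> lam - \<gamma>*(1-q)" using lc q by (simp add: mult_right_mono)
    also have "lam - \<gamma>*(1-q) = L*(1-q) + q*lam" unfolding L_def by (simp add: algebra_simps)
    finally show ?thesis .
  qed
  have k1: "q*lam \<le> q powr c * (L*(1-q) + q*lam)"
    using i1 mult_left_mono[OF i2, of "q powr c"] qc0 by linarith
  have k2: "q*lam/L \<le> (1 - q + q*lam/L) * q powr c"
    using k1 L0 by (simp add: field_simps)
  have "q * lam * (exp (-L*a) / L) = (q*lam/L) * exp (-L*a)" by simp
  also have "\<dots> \<le> ((1 - q + q*lam/L) * q powr c) * exp (-lam*a*c)"
    using k2 e q lam L0 by (intro mult_mono) auto
  also have "\<dots> \<le> ((1 - q + q*lam/L) * q powr c) * exp (-lam*a*c) * (1+\<theta>)"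
  proof -
    have "0 \<le> (1 - q + q*lam/L) * q powr c * exp (-lam*a*c)"
      using q L0 lam by (intro mult_nonneg_nonneg) auto
    then show ?thesis using th by (simp add: distrib_left)
  qed
  also have "\<dots> = (1 - q + q*lam/L) * ((1+\<theta>) * (q * exp (-lam*a)) powr c)"
    unfolding pw by simp
  finally show ?thesis unfolding L_def .
qed



lemma level_set:
  fixes I :: "real \<Rightarrow> real"
  assumes mono: "mono I" and le: "\<forall>x\<ge>0. I x \<le> x" and t: "t \<ge> 0"
    and ne: "{x. 0<x \<and> t < I x} \<noteq> {}"
  shows "\<exists>a\<ge>t. {a<..} \<subseteq> {x. 0<x \<and> t < I x} \<and> {x. 0<x \<and> t < I x} \<subseteq> {a..}"
proof -
  define A where "A = {x. 0<x \<and> t < I x}"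
  have bb: "bdd_below A" unfolding A_def by (rule bdd_belowI[of _ 0]) auto
  define a where "a = Inf A"
  have "t \<le> a" unfolding a_def
  proof (rule cInf_greatest)
    show "A \<noteq> {}" using ne A_def by simp
    fix x assume "x \<in> A"
    then have "0<x" "t < I x" unfolding A_def by auto
    moreover have "I x \<le> x" using le \<open>0<x\<close> by simp
    ultimately show "t \<le> x" by linarith
  qed
  moreover have "A \<subseteq> {a..}" unfolding a_def using bb cInf_lower by auto
  moreover have "{a<..} \<subseteq> A"
  proof
    fix x assume "x \<in> {a<..}"
    then have "Inf A < x" unfolding a_def by simp
    then obtain y where y: "y \<in> A" "y < x" using cInf_less_iff[of A x] bb ne A_def by auto
    then have "I y \<le> I x" using mono by (simp add: monoD)
    then show "x \<in> A" using y unfolding A_def by auto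
  qed
  ultimately show ?thesis unfolding A_def by blast
qed

lemma S_form:
  fixes I :: "real \<Rightarrow> real" and q lam t :: real
  assumes mono: "mono I" and le: "\<forall>x\<ge>0. I x \<le> x" and I0: "I 0 = 0" and t: "t \<ge> 0"
    and lam: "lam > 0"
  shows "survI q lam I t = integral\<^sup>L lborel (\<lambda>x. indicator {x. 0<x \<and> t < I x} x * (q*lam*exp(-lam*x)))"
proof -
  have "survI q lam I t = (LBINT x:{0<..}. (if I x > t then 1 else 0) * (q * lam * exp (- lam * x)))"
    unfolding survI_def expX_def using I0 t by simp
  also have "\<dots> = integral\<^sup>L lborel (\<lambda>x. indicator {x. 0<x \<and> t < I x} x * (q*lam*exp(-lam*x)))"
    unfolding set_lebesgue_integral_def by (intro Bochner_Integration.integral_cong) (auto simp: indicator_def)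
  finally show ?thesis .
qed

lemma per_t:
  fixes I :: "real \<Rightarrow> real" and q lam t L :: real
  assumes mono: "mono I" and le: "\<forall>x\<ge>0. I x \<le> x" and I0: "I 0 = 0" and t: "t \<ge> 0"
    and lam: "lam > 0" and L: "L > 0" and q: "q > 0"
  shows "(survI q lam I t = 0 \<and> (\<integral>\<^sup>+x. ennreal (indicator {x. 0<x \<and> t < I x} x * (q*lam*exp(-L*x))) \<partial>lborel) = 0)
     \<or> (\<exists>a\<ge>t. survI q lam I t = q * exp(-lam*a) \<and>
          (\<integral>\<^sup>+x. ennreal (indicator {x. 0<x \<and> t < I x} x * (q*lam*exp(-L*x))) \<partial>lborel) \<le> ennreal (q*lam*(exp(-L*a)/L)))"
proof (cases "{x. 0<x \<and> t < I x} = {}")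
  case True
  then show ?thesis using S_form[OF mono le I0 t lam, of q] by simp
next
  case False
  define A where "A = {x. 0<x \<and> t < I x}"
  obtain a where a: "a \<ge> t" "{a<..} \<subseteq> A" "A \<subseteq> {a..}"
    using level_set[OF mono le t False] unfolding A_def by blast
  have [measurable]: "I \<in> borel_measurable borel" using mono by (rule borel_measurable_mono)
  have Am[measurable]: "A \<in> sets borel" unfolding A_def by measurable
  have "survI q lam I t = integral\<^sup>L lborel (\<lambda>x. indicator A x * (q*lam*exp(-lam*x)))"
    using S_form[OF mono le I0 t lam, of q] unfolding A_def .
  also have "\<dots> = integral\<^sup>L lborel (\<lambda>x. indicator {a<..} x *\<^sub>R (q*lam*exp(-lam*x)))"
  proof (rule integral_cong_AE)
    show "AE x in lborel. indicator A x * (q * lam * exp (- lam * x)) = indicator {a<..} x *\<^sub>R (q * lam * exp (- lam * x))"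
      using AE_lborel_singleton[of a]
    proof (rule eventually_mono)
      fix x :: real assume "x \<noteq> a" then show "indicator A x * (q * lam * exp (- lam * x)) = indicator {a<..} x *\<^sub>R (q * lam * exp (- lam * x))"
        using a by (auto simp: indicator_def)
    qed
  qed auto
  also have "\<dots> = (LBINT x:{a<..}. q*lam*exp(-lam*x))" unfolding set_lebesgue_integral_def ..
  also have "\<dots> = q*lam*(LBINT x:{a<..}. exp(-lam*x))"
    by (rule set_integral_mult_right)
  also have "\<dots> = q*lam*(exp(-lam*a)/lam)" by (simp only: exp_set'(2)[OF lam, of a])
  also have "\<dots> = q * exp(-lam*a)" using lam by simp
  finally have S: "survI q lam I t = q * exp(-lam*a)" .
  have "(\<integral>\<^sup>+x. ennreal (indicator A x * (q*lam*exp(-L*x))) \<partial>lborel)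
      \<le> (\<integral>\<^sup>+x. ennreal (q*lam) * ennreal (indicator {a..} x * exp(-L*x)) \<partial>lborel)"
  proof (rule nn_integral_mono)
    fix x show "ennreal (indicator A x * (q*lam*exp(-L*x))) \<le> ennreal (q*lam) * ennreal (indicator {a..} x * exp(-L*x))"
      using a q lam by (auto simp: indicator_def ennreal_mult[symmetric])
  qed
  also have "\<dots> = ennreal (q*lam) * ennreal (exp(-L*a)/L)"
    by (subst nn_integral_cmult) (measurable, simp only: exp_nn[OF L])
  also have "\<dots> = ennreal (q*lam*(exp(-L*a)/L))" using q lam L by (subst ennreal_mult[symmetric]) auto
  finally show ?thesis using S a unfolding A_def by blast
qed



lemma survI_meas:
  fixes I :: "real \<Rightarrow> real" assumes [measurable]: "I \<in> borel_measurable borel"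
  shows "(\<lambda>t. survI q lam I t) \<in> borel_measurable borel"
  unfolding survI_def expX_def set_lebesgue_integral_def by measurable

lemma J_bound:
  fixes I :: "real \<Rightarrow> real" and q lam \<theta> c \<gamma> :: real
  assumes mono: "mono I" and le: "\<forall>x\<ge>0. I x \<le> x" and I0: "I 0 = 0" and nn: "\<forall>x. 0 \<le> I x"
    and q: "0 < q" "q \<le> 1" and lam: "0 < lam" and c: "0 < c" "c < 1" and th: "0 \<le> \<theta>"
    and g: "0 < \<gamma>" and lc: "lam * (1 - c) \<ge> \<gamma>"
  shows "set_integrable lborel {0<..} (\<lambda>x. (exp (\<gamma>*x) * I x) * (q * lam * exp (- lam * x)))"
    and "(LBINT x:{0<..}. (exp (\<gamma>*x) * I x) * (q * lam * exp (- lam * x)))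
         \<le> premium (\<lambda>p. (1 + \<theta>) * p powr c) q lam I * (1 - q + q*lam/(lam-\<gamma>))"
proof -
  define L where "L = lam - \<gamma>"
  have Lc: "L \<ge> lam * c" using lc unfolding L_def by (simp add: algebra_simps)
  have L0: "L > 0" using Lc lam c by (smt (verit) mult_pos_pos)
  define M where "M = 1 - q + q*lam/L"
  have M0: "M \<ge> 0" unfolding M_def using q lam L0 by simp
  have Im[measurable]: "I \<in> borel_measurable borel" using mono by (rule borel_measurable_mono)
  define S where "S t = survI q lam I t" for t
  have Sm[measurable]: "S \<in> borel_measurable borel" unfolding S_def by (rule survI_meas[OF Im])
  define p where "p t = indicator {0..} t * ((1+\<theta>) * S t powr c)" for t
  have pm[measurable]: "p \<in> borel_measurable borel" unfolding p_def by measurable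
  have p0: "p t \<ge> 0" for t unfolding p_def using th by simp
  have pint: "integrable lborel p"
  proof -
    have b: "set_integrable lborel {0..} (\<lambda>t. (1+\<theta>) * q powr c * exp(-(lam*c)*t))"
      using exp_set(1)[of "lam*c" 0] lam c by simp
    have "set_integrable lborel {0..} (\<lambda>t. (1+\<theta>) * S t powr c)"
    proof (rule set_integrable_bound[OF b])
      show "set_borel_measurable lborel {0..} (\<lambda>t. (1 + \<theta>) * S t powr c)"
        unfolding set_borel_measurable_def by measurable
      show "AE t in lborel. t \<in> {0..} \<longrightarrow> norm ((1 + \<theta>) * S t powr c) \<le> norm ((1+\<theta>) * q powr c * exp(-(lam*c)*t))"
      proof (rule AE_I2, rule impI)
        fix t :: real assume t: "t \<in> {0..}"
        have t0: "0 \<le> t" using t by simp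
        have "S t powr c \<le> q powr c * exp(-(lam*c)*t)"
          using per_t[OF mono le I0 t0 lam L0 q(1)]
        proof (elim disjE conjE exE)
          assume "survI q lam I t = 0" then show ?thesis using q by (simp add: S_def)
        next
          fix a assume a: "t \<le> a" "survI q lam I t = q * exp (- lam * a)"
          have "S t powr c = q powr c * exp(-lam*a*c)" using a q by (simp add: S_def powr_mult exp_powr_real)
          also have "\<dots> \<le> q powr c * exp(-(lam*c)*t)"
            using a lam c q by (intro mult_left_mono) (auto simp: mult_right_mono)
          finally show ?thesis .
        qed
        then show "norm ((1 + \<theta>) * S t powr c) \<le> norm ((1+\<theta>) * q powr c * exp(-(lam*c)*t))"
          using th by (simp add: abs_mult mult_left_mono)
      qed
    qed
    then show ?thesis unfolding set_integrable_def p_def by simp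
  qed
  have Pdef: "premium (\<lambda>p. (1 + \<theta>) * p powr c) q lam I = integral\<^sup>L lborel p"
    unfolding premium_def set_lebesgue_integral_def p_def S_def by simp
  have Pnn: "(\<integral>\<^sup>+t. ennreal (p t) \<partial>lborel) = ennreal (integral\<^sup>L lborel p)"
    using pint p0 by (intro nn_integral_eq_integral) auto
  have P0: "integral\<^sup>L lborel p \<ge> 0" using p0 by (simp add: integral_nonneg)
  define F where "F x t = ennreal (if 0 \<le> t \<and> 0 < x \<and> t < I x then q*lam*exp(-L*x) else 0)" for x t
  have Fm: "case_prod F \<in> borel_measurable (lborel \<Otimes>\<^sub>M lborel)" unfolding F_def by measurable
  define jf where "jf x = indicator {0<..} x * ((exp (\<gamma>*x) * I x) * (q * lam * exp (- lam * x)))" for x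
  have jfm[measurable]: "jf \<in> borel_measurable borel" unfolding jf_def by measurable
  have jf0: "jf x \<ge> 0" for x unfolding jf_def using nn q lam by simp
  have inner1: "(\<integral>\<^sup>+t. F x t \<partial>lborel) = ennreal (jf x)" for x
  proof (cases "x > 0")
    case True
    have "(\<integral>\<^sup>+t. F x t \<partial>lborel) = (\<integral>\<^sup>+t. ennreal (q*lam*exp(-L*x)) * indicator {0..<I x} t \<partial>lborel)"
      by (intro nn_integral_cong) (auto simp: F_def True indicator_def)
    also have "\<dots> = ennreal (q*lam*exp(-L*x)) * ennreal (I x)"
      using nn by (subst nn_integral_cmult) auto
    also have "\<dots> = ennreal (jf x)"
    proof -
      have "exp (\<gamma>*x) * exp (- lam * x) = exp(-L*x)" unfolding L_def by (simp add: exp_add[symmetric] algebra_simps)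
      then have "jf x = q*lam*exp(-L*x) * I x" unfolding jf_def using True
        by (simp add: algebra_simps)
      then show ?thesis using q lam nn by (simp add: ennreal_mult)
    qed
    finally show ?thesis .
  next
    case False
    then show ?thesis by (simp add: F_def jf_def)
  qed
  have inner2: "(\<integral>\<^sup>+x. F x t \<partial>lborel) \<le> ennreal (M * p t)" for t
  proof (cases "t \<ge> 0")
    case True
    have "(\<integral>\<^sup>+x. F x t \<partial>lborel) = (\<integral>\<^sup>+x. ennreal (indicator {x. 0<x \<and> t < I x} x * (q*lam*exp(-L*x))) \<partial>lborel)"
      by (intro nn_integral_cong) (auto simp: F_def True indicator_def)
    also have "\<dots> \<le> ennreal (M * p t)"
      using per_t[OF mono le I0 True lam L0 q(1)]
    proof (elim disjE conjE exE)
      assume "(\<integral>\<^sup>+x. ennreal (indicator {x. 0<x \<and> t < I x} x * (q*lam*exp(-L*x))) \<partial>lborel) = 0"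
      then show ?thesis by simp
    next
      fix a assume a: "t \<le> a" "survI q lam I t = q * exp (- lam * a)"
        "(\<integral>\<^sup>+x. ennreal (indicator {x. 0<x \<and> t < I x} x * (q*lam*exp(-L*x))) \<partial>lborel) \<le> ennreal (q*lam*(exp(-L*a)/L))"
      have "q*lam*(exp(-L*a)/L) \<le> M * ((1+\<theta>) * (q * exp (-lam*a)) powr c)"
        using key_ineq[OF q lam c th g lc, of a] a True unfolding M_def L_def by simp
      also have "\<dots> = M * p t" unfolding p_def S_def using a True by simp
      finally show ?thesis using a(3) order_trans ennreal_leI by blast
    qed
    finally show ?thesis .
  next
    case False
    then show ?thesis by (simp add: F_def)
  qed
  have "(\<integral>\<^sup>+x. ennreal (jf x) \<partial>lborel) = (\<integral>\<^sup>+x. \<integral>\<^sup>+t. F x t \<partial>lborel \<partial>lborel)"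
    by (simp add: inner1)
  also have "\<dots> = (\<integral>\<^sup>+t. \<integral>\<^sup>+x. F x t \<partial>lborel \<partial>lborel)"
    using lborel_pair.Fubini'[OF Fm] by simp
  also have "\<dots> \<le> (\<integral>\<^sup>+t. ennreal M * ennreal (p t) \<partial>lborel)"
    using inner2 M0 p0 by (intro nn_integral_mono) (metis ennreal_mult)
  also have "\<dots> = ennreal M * ennreal (integral\<^sup>L lborel p)"
    by (subst nn_integral_cmult) (auto simp: Pnn)
  also have "\<dots> = ennreal (integral\<^sup>L lborel p * M)" using M0 P0 by (simp add: ennreal_mult mult.commute)
  finally have le1: "(\<integral>\<^sup>+x. ennreal (jf x) \<partial>lborel) \<le> ennreal (integral\<^sup>L lborel p * M)" .
  have jint: "integrable lborel jf"
    using le1 jf0 by (intro integrableI_nonneg) (auto simp: top_unique intro: le_less_trans)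
  then show "set_integrable lborel {0<..} (\<lambda>x. (exp (\<gamma>*x) * I x) * (q * lam * exp (- lam * x)))"
    unfolding set_integrable_def jf_def by simp
  have "(LBINT x:{0<..}. (exp (\<gamma>*x) * I x) * (q * lam * exp (- lam * x))) = integral\<^sup>L lborel jf"
    unfolding set_lebesgue_integral_def jf_def by simp
  also have "\<dots> = enn2real (\<integral>\<^sup>+x. ennreal (jf x) \<partial>lborel)"
    using jf0 by (intro integral_eq_nn_integral) auto
  also have "\<dots> \<le> enn2real (ennreal (integral\<^sup>L lborel p * M))"
    using le1 by (intro enn2real_mono) auto
  also have "\<dots> = integral\<^sup>L lborel p * M" using P0 M0 by simp
  finally show "(LBINT x:{0<..}. (exp (\<gamma>*x) * I x) * (q * lam * exp (- lam * x)))
         \<le> premium (\<lambda>p. (1 + \<theta>) * p powr c) q lam I * (1 - q + q*lam/(lam-\<gamma>))"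
    unfolding Pdef M_def L_def .
qed



lemma u_form:
  fixes u :: "real \<Rightarrow> real" and \<gamma> :: real
  assumes d: "\<And>x. (u has_real_derivative exp (- \<gamma> * x)) (at x)" and g: "\<gamma> > 0"
  shows "u y = (u 0 + 1/\<gamma>) - exp (-\<gamma>*y)/\<gamma>"
proof -
  define h where "h y = u y + exp (-\<gamma>*y)/\<gamma>" for y
  have "\<forall>x. (h has_real_derivative 0) (at x)"
  proof
    fix x
    have d2: "((\<lambda>y. exp (-\<gamma>*y)/\<gamma>) has_real_derivative (exp (-\<gamma>*x) * (-\<gamma>) / \<gamma>)) (at x)"
      using g by (auto intro!: derivative_eq_intros simp: field_simps)
    have "(h has_real_derivative (exp (- \<gamma> * x) + exp (-\<gamma>*x) * (-\<gamma>) / \<gamma>)) (at x)"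
      unfolding h_def by (rule DERIV_add[OF d d2])
    then show "(h has_real_derivative 0) (at x)" using g by simp
  qed
  then have "h y = h 0" by (rule DERIV_isconst_all)
  then show ?thesis unfolding h_def by (simp add: algebra_simps)
qed

lemma premium_zero:
  fixes c \<theta> q lam :: real
  assumes "0 < c"
  shows "premium (\<lambda>p. (1 + \<theta>) * p powr c) q lam (\<lambda>_. 0) = 0"
proof -
  have "(\<lambda>t. indicator {0..} t *\<^sub>R ((1 + \<theta>) * survI q lam (\<lambda>_. 0) t powr c)) = (\<lambda>t. 0::real)"
    by (auto simp: survI_def expX_def fun_eq_iff indicator_def)
  then show ?thesis unfolding premium_def set_lebesgue_integral_def by simp
qed
lemma EU_le:
  fixes I :: "real \<Rightarrow> real" and q lam \<theta> c \<gamma> w :: real and u :: "real \<Rightarrow> real"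
  assumes mono: "mono I" and le: "\<forall>x\<ge>0. I x \<le> x" and I0: "I 0 = 0" and nn: "\<forall>x. 0 \<le> I x"
    and q: "0 < q" "q \<le> 1" and lam: "0 < lam" and c: "0 < c" "c < 1" and th: "0 \<le> \<theta>"
    and g: "0 < \<gamma>" and d: "\<And>x. (u has_real_derivative exp (- \<gamma> * x)) (at x)"
    and lc: "lam * (1 - c) \<ge> \<gamma>"
  shows "EU u (\<lambda>p. (1 + \<theta>) * p powr c) q lam w I \<le> EU u (\<lambda>p. (1 + \<theta>) * p powr c) q lam w (\<lambda>_. 0)"
proof -
  define L where "L = lam - \<gamma>"
  have Lc: "L \<ge> lam * c" using lc unfolding L_def by (simp add: algebra_simps)
  have L0: "L > 0" using Lc lam c by (smt (verit) mult_pos_pos)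
  define K where "K = u 0 + 1/\<gamma>"
  have uf: "u y = K - exp (-\<gamma>*y)/\<gamma>" for y unfolding K_def by (rule u_form[OF d g])
  define E0 where "E0 = exp (-\<gamma>*w)"
  have E0p: "E0 > 0" unfolding E0_def by simp
  define P where "P = premium (\<lambda>p. (1 + \<theta>) * p powr c) q lam I"
  have Im[measurable]: "I \<in> borel_measurable borel" using mono by (rule borel_measurable_mono)
  define gg where "gg x = q*lam*exp(-lam*x)" for x
  have expg: "exp (\<gamma>*x) * exp (- lam * x) = exp(-L*x)" for x
    unfolding L_def by (simp add: exp_add[symmetric] algebra_simps)
  have pw: "u (w - x + I x - P) \<le> u (w - x) - E0*(P*exp(\<gamma>*x) - exp(\<gamma>*x)*I x)" for x
  proof -
    have eq: "exp (-\<gamma>*(w - x + I x - P)) = E0*exp(\<gamma>*x)*exp(\<gamma>*(P - I x))"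
      unfolding E0_def by (simp add: exp_add[symmetric] algebra_simps)
    have "E0*exp(\<gamma>*x)*(1 + \<gamma>*(P - I x)) \<le> E0*exp(\<gamma>*x)*exp(\<gamma>*(P - I x))"
      using E0p by (intro mult_left_mono) auto
    then have "E0*exp(\<gamma>*x)*(1 + \<gamma>*(P - I x))/\<gamma> \<le> exp (-\<gamma>*(w - x + I x - P))/\<gamma>"
      unfolding eq using g by (simp add: divide_right_mono)
    moreover have "exp (-\<gamma>*(w - x)) = E0*exp(\<gamma>*x)"
      unfolding E0_def by (simp add: exp_add[symmetric] algebra_simps)
    ultimately show ?thesis unfolding uf using g by (simp add: field_simps)
  qed
  have pw0: "u (w - P) \<le> u w - E0*P"
    using pw[of 0] I0 by simp
  have ig: "set_integrable lborel {0<..} gg"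
    unfolding gg_def using exp_set'(1)[OF lam, of 0] by simp
  have ih1: "set_integrable lborel {0<..} (\<lambda>x. exp(\<gamma>*x) * gg x)"
  proof -
    have "set_integrable lborel {0<..} (\<lambda>x. q*lam*exp(-L*x))" using exp_set'(1)[OF L0, of 0] by simp
    moreover have "(\<lambda>x. exp(\<gamma>*x) * gg x) = (\<lambda>x. q*lam*exp(-L*x))"
      unfolding gg_def using expg by (auto simp: fun_eq_iff algebra_simps)
    ultimately show ?thesis by simp
  qed
  have vh1: "(LBINT x:{0<..}. exp(\<gamma>*x) * gg x) = q*lam/L"
  proof -
    have "(\<lambda>x. exp(\<gamma>*x) * gg x) = (\<lambda>x. q*lam*exp(-L*x))"
      unfolding gg_def using expg by (auto simp: fun_eq_iff algebra_simps)
    then have "(LBINT x:{0<..}. exp(\<gamma>*x) * gg x) = (LBINT x:{0<..}. q*lam*exp(-L*x))" by simp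
    also have "\<dots> = q*lam*(LBINT x:{0<..}. exp(-L*x))" by (rule set_integral_mult_right)
    also have "\<dots> = q*lam*(exp(-L*0)/L)" by (simp only: exp_set'(2)[OF L0, of 0])
    finally show ?thesis by simp
  qed
  have ih2: "set_integrable lborel {0<..} (\<lambda>x. (exp (\<gamma>*x) * I x) * gg x)"
    and vh2: "(LBINT x:{0<..}. (exp (\<gamma>*x) * I x) * gg x) \<le> P * (1 - q + q*lam/L)"
    using J_bound[OF mono le I0 nn q lam c th g lc] unfolding gg_def P_def L_def by auto
  have if2: "set_integrable lborel {0<..} (\<lambda>x. u (w - x) * gg x)"
  proof -
    have "(\<lambda>x. u (w - x) * gg x) = (\<lambda>x. K * gg x - (E0/\<gamma>) * (exp(\<gamma>*x) * gg x))"
      unfolding uf E0_def by (auto simp: fun_eq_iff field_simps exp_add[symmetric])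
    moreover have "set_integrable lborel {0<..} (\<lambda>x. K * gg x - (E0/\<gamma>) * (exp(\<gamma>*x) * gg x))"
      using ig ih1 by auto
    ultimately show ?thesis by simp
  qed
  have if1: "set_integrable lborel {0<..} (\<lambda>x. u (w - x + I x - P) * gg x)"
  proof (rule set_integrable_bound)
    show "set_integrable lborel {0<..} (\<lambda>x. \<bar>K\<bar> * gg x + (E0*exp(\<gamma>*P)/\<gamma>) * (exp(\<gamma>*x) * gg x))"
      using ig ih1 by auto
    show "set_borel_measurable lborel {0<..} (\<lambda>x. u (w - x + I x - P) * gg x)"
      unfolding set_borel_measurable_def uf gg_def by measurable
    show "AE x in lborel. x \<in> {0<..} \<longrightarrow> norm (u (w - x + I x - P) * gg x) \<le> norm (\<bar>K\<bar> * gg x + (E0*exp(\<gamma>*P)/\<gamma>) * (exp(\<gamma>*x) * gg x))"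
    proof (rule AE_I2, rule impI)
      fix x :: real assume x: "x \<in> {0<..}"
      have gp: "gg x > 0" unfolding gg_def using q lam by simp
      have e1: "exp (-\<gamma>*(w - x + I x - P)) \<le> E0*exp(\<gamma>*P)*exp(\<gamma>*x)"
      proof -
        have "exp (-\<gamma>*(w - x + I x - P)) = E0*exp(\<gamma>*P)*exp(\<gamma>*x)*exp(-\<gamma>*I x)"
          unfolding E0_def by (simp add: exp_add[symmetric] algebra_simps)
        also have "\<dots> \<le> E0*exp(\<gamma>*P)*exp(\<gamma>*x)*1"
          using nn g E0p by (intro mult_left_mono) auto
        finally show ?thesis by simp
      qed
      have "\<bar>u (w - x + I x - P)\<bar> \<le> \<bar>K\<bar> + E0*exp(\<gamma>*P)*exp(\<gamma>*x)/\<gamma>"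
        unfolding uf using e1 g by (smt (verit) divide_right_mono exp_gt_zero divide_pos_pos)
      then have "\<bar>u (w - x + I x - P)\<bar> * gg x \<le> (\<bar>K\<bar> + E0*exp(\<gamma>*P)*exp(\<gamma>*x)/\<gamma>) * gg x"
        using gp by (intro mult_right_mono) auto
      moreover have "0 \<le> (\<bar>K\<bar> + E0*exp(\<gamma>*P)*exp(\<gamma>*x)/\<gamma>) * gg x"
        using gp E0p g by simp
      ultimately show "norm (u (w - x + I x - P) * gg x) \<le> norm (\<bar>K\<bar> * gg x + (E0*exp(\<gamma>*P)/\<gamma>) * (exp(\<gamma>*x) * gg x))"
        using gp by (simp add: abs_mult algebra_simps)
    qed
  qed
  have "(LBINT x:{0<..}. u (w - x + I x - P) * gg x)
        \<le> (LBINT x:{0<..}. u (w - x) * gg x - E0 * (P * (exp(\<gamma>*x) * gg x) - (exp (\<gamma>*x) * I x) * gg x))"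
  proof (rule set_integral_mono)
    show "set_integrable lborel {0<..} (\<lambda>x. u (w - x + I x - P) * gg x)" by (rule if1)
    show "set_integrable lborel {0<..} (\<lambda>x. u (w - x) * gg x - E0 * (P * (exp(\<gamma>*x) * gg x) - (exp (\<gamma>*x) * I x) * gg x))"
      using if2 ih1 ih2 by auto
    fix x :: real assume x: "x \<in> {0<..}"
    have gp: "gg x \<ge> 0" unfolding gg_def using q lam by simp
    show "u (w - x + I x - P) * gg x \<le> u (w - x) * gg x - E0 * (P * (exp(\<gamma>*x) * gg x) - (exp (\<gamma>*x) * I x) * gg x)"
      using mult_right_mono[OF pw[of x] gp] by (simp add: algebra_simps)
  qed
  also have "\<dots> = (LBINT x:{0<..}. u (w - x) * gg x) - E0 * (P * (LBINT x:{0<..}. exp(\<gamma>*x) * gg x) - (LBINT x:{0<..}. (exp (\<gamma>*x) * I x) * gg x))"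
    using if2 ih1 ih2 by (simp add: set_integral_diff set_integral_mult_right)
  finally have main: "(LBINT x:{0<..}. u (w - x + I x - P) * gg x)
     \<le> (LBINT x:{0<..}. u (w - x) * gg x) - E0 * (P * (q*lam/L) - (LBINT x:{0<..}. (exp (\<gamma>*x) * I x) * gg x))"
    unfolding vh1 .
  have EUI: "EU u (\<lambda>p. (1 + \<theta>) * p powr c) q lam w I = (1-q) * u (w - P) + (LBINT x:{0<..}. u (w - x + I x - P) * gg x)"
    unfolding EU_def expX_def P_def gg_def using I0 by simp
  have EU0: "EU u (\<lambda>p. (1 + \<theta>) * p powr c) q lam w (\<lambda>_. 0) = (1-q) * u w + (LBINT x:{0<..}. u (w - x) * gg x)"
    unfolding EU_def expX_def gg_def premium_zero[OF c(1)] by simp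
  have "E0 * (P * (1-q)) + E0 * (P * (q*lam/L) - (LBINT x:{0<..}. (exp (\<gamma>*x) * I x) * gg x)) \<ge> 0"
  proof -
    have "P * (1-q) + (P * (q*lam/L) - (LBINT x:{0<..}. (exp (\<gamma>*x) * I x) * gg x)) \<ge> 0"
      using vh2 by (simp add: algebra_simps)
    then show ?thesis using E0p by (metis distrib_left mult_nonneg_nonneg less_imp_le)
  qed
  moreover have "(1-q) * u (w - P) \<le> (1-q) * (u w - E0*P)"
    using pw0 q by (intro mult_left_mono) auto
  ultimately show ?thesis unfolding EUI EU0 using main by (simp add: algebra_simps)
qed



lemma expX_cong:
  assumes "f 0 = h 0" "\<And>x. x > 0 \<Longrightarrow> f x = h x"
  shows "expX q lam f = expX q lam h"
proof -
  have "(LBINT x:{0<..}. f x * (q * lam * exp (- lam * x))) = (LBINT x:{0<..}. h x * (q * lam * exp (- lam * x)))"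
    unfolding set_lebesgue_integral_def
    by (intro Bochner_Integration.integral_cong) (auto simp: assms(2) indicator_def)
  then show ?thesis unfolding expX_def using assms(1) by simp
qed

theorem proposition4p1:
  fixes q lam \<theta> c \<gamma> w :: real and u :: "real \<Rightarrow> real"
  assumes "0 < q" and "q \<le> 1" and "0 < lam"
    and "0 < c" and "c < 1" and "0 \<le> \<theta>" and "0 < \<gamma>"
    and "\<And>x. (u has_real_derivative exp (- \<gamma> * x)) (at x)"
    and "lam * (1 - c) \<ge> \<gamma>"
  shows "(\<lambda>_. 0) \<in> Ic \<and>
         (\<forall>I\<in>Ic. EU u (\<lambda>p. (1 + \<theta>) * p powr c) q lam w I
                  \<le> EU u (\<lambda>p. (1 + \<theta>) * p powr c) q lam w (\<lambda>_. 0))"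
proof
  show "(\<lambda>_. 0) \<in> Ic" unfolding Ic_def by simp
  show "\<forall>I\<in>Ic. EU u (\<lambda>p. (1 + \<theta>) * p powr c) q lam w I
                  \<le> EU u (\<lambda>p. (1 + \<theta>) * p powr c) q lam w (\<lambda>_. 0)"
  proof
    fix I assume "I \<in> Ic"
    then have b: "\<And>x. x \<ge> 0 \<Longrightarrow> 0 \<le> I x \<and> I x \<le> x"
      and m: "\<And>x y. 0 \<le> y \<Longrightarrow> y \<le> x \<Longrightarrow> 0 \<le> I x - I y"
      unfolding Ic_def by auto
    define J where "J x = I (max 0 x)" for x
    have Jm: "mono J" unfolding J_def
      by (rule monoI) (use m in \<open>smt (verit)\<close>)
    have Jle: "\<forall>x\<ge>0. J x \<le> x" unfolding J_def using b by simp
    have J0: "J 0 = 0" unfolding J_def using b[of 0] by simp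
    have Jnn: "\<forall>x. 0 \<le> J x" unfolding J_def using b by simp
    have IJ: "I x = J x" if "x > 0" for x unfolding J_def using that by simp
    have I0: "I 0 = J 0" unfolding J_def by simp
    have sv: "survI q lam I = survI q lam J"
      unfolding survI_def fun_eq_iff by (auto intro!: expX_cong simp: I0 IJ)
    have pr: "premium kt q lam I = premium kt q lam J" for kt unfolding premium_def sv ..
    have "EU u (\<lambda>p. (1 + \<theta>) * p powr c) q lam w I = EU u (\<lambda>p. (1 + \<theta>) * p powr c) q lam w J"
      unfolding EU_def pr by (auto intro!: expX_cong simp: I0 IJ)
    also have "\<dots> \<le> EU u (\<lambda>p. (1 + \<theta>) * p powr c) q lam w (\<lambda>_. 0)"
      by (rule EU_le[OF Jm Jle J0 Jnn assms(1-7) assms(8) assms(9)])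
    finally show "EU u (\<lambda>p. (1 + \<theta>) * p powr c) q lam w I
                  \<le> EU u (\<lambda>p. (1 + \<theta>) * p powr c) q lam w (\<lambda>_. 0)" .
  qed
qed


end
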